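(* Let $(L,\vee,\wedge,0,1)$ be a finite complemented lattice with $0\ne1$ such that the mapping $x\mapsto x^{++}$ from $L$ to $2^L$ is injective, and let $a\in L$ with $a^{++}\neq\{a\}$. Then there exists some $b\in a^{++}$ with $b^{++}=\{b\}$.
   Context: For $a\in L$, $a^+:=\{x\in L\mid a\vee x=1,\ a\wedge x=0\}$ (the set of all complements of $a$). For $A\subseteq L$, $A^+:=\{x\in L\mid a\vee x=1\text{ and }a\wedge x=0\text{ for all }a\in A\}$, and $a^{++}:=(a^+)^+$. *)

theory Defs
  imports Main
begin

definition compls :: "'a::bounded_lattice \<Rightarrow> 'a set" where
  "compls a = {x. sup a x = top \<and> inf a x = bot}"

definition compls_set :: "'a::bounded_lattice set \<Rightarrow> 'a set" where
  "compls_set A = {x. \<forall>a\<in>A. sup a x = top \<and> inf a x = bot}"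

definition dcompls :: "'a::bounded_lattice \<Rightarrow> 'a set" where
  "dcompls a = compls_set (compls a)"

end

theory Submission
  imports Defs
begin

lemma self_dcompls: "(b::'a::bounded_lattice) \<in> dcompls b"
  by (auto simp: dcompls_def compls_set_def compls_def sup_commute inf_commute)

lemma dcompls_mono:
  assumes "(b::'a::bounded_lattice) \<in> dcompls a"
  shows "dcompls b \<subseteq> dcompls a"
proof -
  have "compls a \<subseteq> compls b"
    using assms by (auto simp: dcompls_def compls_set_def compls_def sup_commute inf_commute)
  then show ?thesis by (auto simp: dcompls_def compls_set_def)
qed

theorem proposition2:
  fixes a :: "'a::{bounded_lattice, finite}"
  assumes complemented: "\<forall>x::'a. \<exists>y. sup x y = top \<and> inf x y = bot"
    and nontrivial: "(bot::'a) \<noteq> top"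
    and inj: "inj (dcompls :: 'a \<Rightarrow> 'a set)"
    and a: "dcompls a \<noteq> {a}"
  shows "\<exists>b\<in>dcompls a. dcompls b = {b}"
proof -
  obtain b where b: "b \<in> dcompls a"
    and bmin: "\<forall>y. y \<in> dcompls a \<longrightarrow> card (dcompls b) \<le> card (dcompls y)"
    using ex_has_least_nat[of "\<lambda>x. x \<in> dcompls a" a "\<lambda>x. card (dcompls x)"] self_dcompls[of a]
    by blast
  have "dcompls b = {b}"
  proof (rule ccontr)
    assume "dcompls b \<noteq> {b}"
    then obtain c where c: "c \<in> dcompls b" "c \<noteq> b" using self_dcompls[of b] by blast
    have sub: "dcompls c \<subseteq> dcompls b" using dcompls_mono[OF c(1)] .
    have "c \<in> dcompls a" using c(1) dcompls_mono[OF b] by blast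
    then have "card (dcompls b) \<le> card (dcompls c)" using bmin by blast
    then have "dcompls c = dcompls b" using sub by (simp add: card_seteq)
    then have "c = b" using inj by (simp add: inj_eq)
    then show False using c(2) by simp
  qed
  then show ?thesis using b by blast
qed

end
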